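(* In the Setting below, for each $i$ the digraph $O_i$ is an out-tree rooted at $r$, and every vertex of $O_i$ with positive out-degree has out-degree at least two.
   Context: A test $T$ on $[n]$ separates $i\neq j$ if $|\{i,j\}\cap T|=1$. The classes induced by a collection $\mathcal{T}'$ of tests are the equivalence classes of the relation "$i,j$ are not separated by any test of $\mathcal{T}'$". Setting: $\mathcal{T}$ is a collection of distinct tests on $[n]$ that is a test cover and contains every singleton $\{x\}$, $x\in[n]$; $\mathcal{F}\subseteq\mathcal{T}$ has the property that for every $T\in\mathcal{T}\setminus\mathcal{F}$, $\mathcal{F}\cup\{T\}$ induces at most one more class than $\mathcal{F}$, and for every two $T,T'\in\mathcal{T}\setminus\mathcal{F}$, $\mathcal{F}\cup\{T,T'\}$ induces at most two more classes than $\mathcal{F}$. Let $C_1,\dots,C_l$ be the classes induced by $\mathcal{F}$. For $C\subseteq[n]$, a test $S\in\mathcal{T}$ is a $C$-test if $S\cap C\neq\emptyset$ and $C\setminus S\neq\emptyset$; $L(S)=S\cap C$. Every $C_i$-test $S$ satisfies $|S\cap C_i|\le|C_i|/2$. The digraph $O_i$ has a root vertex $r$ with $S_r=C_i$, and one further vertex $v$ for each distinct set $S_v\subseteq C_i$ such that $S_v=L(S)$ for some $C_i$-test $S\in\mathcal{T}$; there is an arc from $v$ to $w$ iff $S_w\subsetneq S_v$ and there is no vertex $u$ with $S_w\subsetneq S_u\subsetneq S_v$. An out-tree is an orientation of a tree with exactly one vertex of in-degree zero (the root). *)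

theory Defs
  imports Main
begin

definition separates :: "nat set \<Rightarrow> nat \<Rightarrow> nat \<Rightarrow> bool" where
  "separates T i j \<equiv> i \<noteq> j \<and> card ({i, j} \<inter> T) = 1"

definition is_test_cover :: "nat \<Rightarrow> nat set set \<Rightarrow> bool" where
  "is_test_cover n \<T> \<equiv> (\<forall>T\<in>\<T>. T \<subseteq> {1..n}) \<and>
     (\<forall>i\<in>{1..n}. \<forall>j\<in>{1..n}. i \<noteq> j \<longrightarrow> (\<exists>T\<in>\<T>. separates T i j))"

text \<open>The relation "i, j are not separated by any test of \<T>'" on [n] (reflexive by convention).\<close>
definition not_sep_rel :: "nat \<Rightarrow> nat set set \<Rightarrow> (nat \<times> nat) set" where
  "not_sep_rel n \<T>' \<equiv> {(i, j). i \<in> {1..n} \<and> j \<in> {1..n} \<and> \<not> (\<exists>T\<in>\<T>'. separates T i j)}"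

definition induced_classes :: "nat \<Rightarrow> nat set set \<Rightarrow> nat set set" where
  "induced_classes n \<T>' \<equiv> {1..n} // not_sep_rel n \<T>'"

definition is_C_test :: "nat set \<Rightarrow> nat set \<Rightarrow> bool" where
  "is_C_test C S \<equiv> S \<inter> C \<noteq> {} \<and> C - S \<noteq> {}"

text \<open>Vertices are identified with their sets S_v: the root C and the distinct sets S \<inter> C
  for C-tests S in \<T>.\<close>
definition O_verts :: "nat set set \<Rightarrow> nat set \<Rightarrow> nat set set" where
  "O_verts \<T> C \<equiv> insert C {S \<inter> C | S. S \<in> \<T> \<and> is_C_test C S}"

definition O_arcs :: "nat set set \<Rightarrow> nat set \<Rightarrow> (nat set \<times> nat set) set" where
  "O_arcs \<T> C \<equiv> {(A, B). A \<in> O_verts \<T> C \<and> B \<in> O_verts \<T> C \<and> B \<subset> A \<and>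
      \<not> (\<exists>U\<in>O_verts \<T> C. B \<subset> U \<and> U \<subset> A)}"

definition ucycle :: "'a set \<Rightarrow> ('a \<Rightarrow> 'a \<Rightarrow> bool) \<Rightarrow> 'a list \<Rightarrow> bool" where
  "ucycle V E xs \<equiv> 3 \<le> length xs \<and> distinct xs \<and> set xs \<subseteq> V \<and>
     (\<forall>i. Suc i < length xs \<longrightarrow> E (xs ! i) (xs ! Suc i)) \<and> E (last xs) (hd xs)"

definition is_utree :: "'a set \<Rightarrow> ('a \<Rightarrow> 'a \<Rightarrow> bool) \<Rightarrow> bool" where
  "is_utree V E \<equiv> V \<noteq> {} \<and>
     (\<forall>u\<in>V. \<forall>v\<in>V. (u, v) \<in> {(x, y). x \<in> V \<and> y \<in> V \<and> E x y}\<^sup>*) \<and>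
     \<not> (\<exists>xs. ucycle V E xs)"

definition in_degree :: "('a \<times> 'a) set \<Rightarrow> 'a \<Rightarrow> nat" where
  "in_degree A v \<equiv> card {u. (u, v) \<in> A}"

definition out_degree :: "('a \<times> 'a) set \<Rightarrow> 'a \<Rightarrow> nat" where
  "out_degree A v \<equiv> card {w. (v, w) \<in> A}"

definition is_out_tree_rooted :: "'a set \<Rightarrow> ('a \<times> 'a) set \<Rightarrow> 'a \<Rightarrow> bool" where
  "is_out_tree_rooted V A r \<equiv> finite V \<and> A \<subseteq> V \<times> V \<and>
     (\<forall>u v. (u, v) \<in> A \<longrightarrow> u \<noteq> v \<and> (v, u) \<notin> A) \<and>
     is_utree V (\<lambda>u v. (u, v) \<in> A \<or> (v, u) \<in> A) \<and>
     {v \<in> V. in_degree A v = 0} = {r}"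

end

theory Submission
  imports Defs
begin


definition hasse :: "'a set set \<Rightarrow> ('a set \<times> 'a set) set" where
  "hasse V = {(A, B). A \<in> V \<and> B \<in> V \<and> B \<subset> A \<and> \<not> (\<exists>U\<in>V. B \<subset> U \<and> U \<subset> A)}"

lemma O_arcs_eq: "O_arcs T C = hasse (O_verts T C)"
  by (simp add: O_arcs_def hasse_def)

lemma hasse_down:
  assumes "finite V" "X \<in> V" "Y \<in> V" "Y \<subset> X"
  shows "\<exists>U. (X, U) \<in> hasse V \<and> Y \<subseteq> U"
proof -
  let ?M = "{U\<in>V. Y \<subseteq> U \<and> U \<subset> X}"
  have fM: "finite ?M" using assms(1) by simp
  have "Y \<in> ?M \<or> X \<in> ?M" using assms by blast
  then have nM: "?M \<noteq> {}" by blast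
  obtain m where m: "m \<in> ?M" "\<forall>b\<in>?M. m \<le> b \<longrightarrow> m = b"
    using finite_has_maximal[OF fM nM] by blast
  have "\<not> (\<exists>U\<in>V. m \<subset> U \<and> U \<subset> X)"
  proof
    assume "\<exists>U\<in>V. m \<subset> U \<and> U \<subset> X"
    then obtain U where U: "U \<in> V" "m \<subset> U" "U \<subset> X" by blast
    then have "U \<in> ?M" using m(1) by blast
    then show False using m(2) U(2) by blast
  qed
  then have "(X, m) \<in> hasse V"
    unfolding hasse_def using m(1) assms(2) by blast
  then show ?thesis using m by blast
qed

lemma hasse_up:
  assumes "finite V" "X \<in> V" "Y \<in> V" "Y \<subset> X"
  shows "\<exists>U. (U, Y) \<in> hasse V \<and> U \<subseteq> X"
proof -
  let ?M = "{U\<in>V. Y \<subset> U \<and> U \<subseteq> X}"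
  have fM: "finite ?M" using assms(1) by simp
  have "Y \<in> ?M \<or> X \<in> ?M" using assms by blast
  then have nM: "?M \<noteq> {}" by blast
  obtain m where m: "m \<in> ?M" "\<forall>b\<in>?M. b \<le> m \<longrightarrow> m = b"
    using finite_has_minimal[OF fM nM] by blast
  have "\<not> (\<exists>U\<in>V. Y \<subset> U \<and> U \<subset> m)"
  proof
    assume "\<exists>U\<in>V. Y \<subset> U \<and> U \<subset> m"
    then obtain U where U: "U \<in> V" "Y \<subset> U" "U \<subset> m" by blast
    then have "U \<in> ?M" using m(1) by blast
    then show False using m(2) U(3) by blast
  qed
  then have "(m, Y) \<in> hasse V"
    unfolding hasse_def using m(1) assms(3) by blast
  then show ?thesis using m by blast
qed

locale lam_fam =
  fixes V :: "'a set set" and C :: "'a set"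
  assumes fin: "finite V" and root: "C \<in> V" and sub: "\<forall>X\<in>V. X \<subseteq> C"
    and ne: "\<forall>X\<in>V. X \<noteq> C \<longrightarrow> X \<noteq> {}"
    and lam: "\<forall>X\<in>V. \<forall>Y\<in>V. X \<inter> Y = {} \<or> X \<subseteq> Y \<or> Y \<subseteq> X"
begin

lemma unique_parent:
  assumes "(P, Y) \<in> hasse V" "(Q, Y) \<in> hasse V" shows "P = Q"
proof -
  have h: "P \<in> V" "Q \<in> V" "Y \<in> V" "Y \<subset> P" "Y \<subset> Q"
    "\<not> (\<exists>U\<in>V. Y \<subset> U \<and> U \<subset> P)" "\<not> (\<exists>U\<in>V. Y \<subset> U \<and> U \<subset> Q)"
    using assms unfolding hasse_def by auto
  have "P \<subseteq> C" using h(1) sub by blast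
  then have "Y \<noteq> C" using h(4) by blast
  then have "Y \<noteq> {}" using ne h(3) by blast
  then have "P \<inter> Q \<noteq> {}" using h(4,5) by blast
  then have PQ: "P \<subseteq> Q \<or> Q \<subseteq> P" using lam h(1,2) by blast
  show ?thesis
  proof (rule ccontr)
    assume "P \<noteq> Q"
    then have "P \<subset> Q \<or> Q \<subset> P" using PQ by blast
    then show False
    proof
      assume "P \<subset> Q" then show False using h(1,4,7) by blast
    next
      assume "Q \<subset> P" then show False using h(2,5,6) by blast
    qed
  qed
qed

abbreviation "E \<equiv> (\<lambda>u v. (u, v) \<in> hasse V \<or> (v, u) \<in> hasse V)"

lemma to_root:
  assumes "v \<in> V"
  shows "(v, C) \<in> {(x, y). x \<in> V \<and> y \<in> V \<and> E x y}\<^sup>*"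
  using assms
proof (induction "card {U\<in>V. v \<subset> U}" arbitrary: v rule: less_induct)
  case less
  show ?case
  proof (cases "v = C")
    case True then show ?thesis by simp
  next
    case False
    then have "v \<subset> C" using sub less.prems by blast
    then obtain p where p: "(p, v) \<in> hasse V" using hasse_up[OF fin root less.prems] by blast
    then have pv: "p \<in> V" "v \<subset> p" unfolding hasse_def by auto
    have ps: "{U\<in>V. p \<subset> U} \<subset> {U\<in>V. v \<subset> U}"
    proof
      show "{U\<in>V. p \<subset> U} \<subseteq> {U\<in>V. v \<subset> U}" using pv(2) by (blast intro: psubset_trans)
      show "{U\<in>V. p \<subset> U} \<noteq> {U\<in>V. v \<subset> U}" using pv by blast
    qed
    have fs: "finite {U\<in>V. v \<subset> U}" using fin by simp
    have "card {U\<in>V. p \<subset> U} < card {U\<in>V. v \<subset> U}"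
      by (rule psubset_card_mono[OF fs ps])
    then have "(p, C) \<in> {(x, y). x \<in> V \<and> y \<in> V \<and> E x y}\<^sup>*" by (rule less.hyps[OF _ pv(1)])
    moreover have "(v, p) \<in> {(x, y). x \<in> V \<and> y \<in> V \<and> E x y}" using p pv(1) less.prems by simp
    ultimately show ?thesis by (rule converse_rtrancl_into_rtrancl[rotated])
  qed
qed

lemma connected:
  assumes "u \<in> V" "v \<in> V"
  shows "(u, v) \<in> {(x, y). x \<in> V \<and> y \<in> V \<and> E x y}\<^sup>*"
proof -
  let ?R = "{(x, y). x \<in> V \<and> y \<in> V \<and> E x y}"
  have sym: "?R\<inverse> = ?R" by auto
  have "(v, C) \<in> ?R\<^sup>*" using to_root assms by blast
  then have "(C, v) \<in> (?R\<inverse>)\<^sup>*" by (simp add: rtrancl_converseI)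
  then have "(C, v) \<in> ?R\<^sup>*" using sym by simp
  then show ?thesis by (rule rtrancl_trans[OF to_root[OF assms(1)]])
qed

lemma no_cycle: "\<not> ucycle V E xs"
proof
  assume cy: "ucycle V E xs"
  define L where "L = length xs"
  have L3: "3 \<le> L" and dist: "distinct xs" and sV: "set xs \<subseteq> V"
    and st: "\<And>i. Suc i < L \<Longrightarrow> E (xs ! i) (xs ! Suc i)" and cl: "E (last xs) (hd xs)"
    using cy unfolding ucycle_def L_def by auto
  have adj: "E (xs ! j) (xs ! (Suc j mod L))" if "j < L" for j
  proof (cases "Suc j < L")
    case True then show ?thesis using st by simp
  next
    case False
    then have "Suc j = L" using that by simp
    moreover have "xs \<noteq> []" using L3 L_def by auto
    ultimately show ?thesis using cl
      by (metis L_def diff_Suc_1 hd_conv_nth last_conv_nth mod_self)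
  qed
  have fx: "finite (set xs)" by simp
  have nx: "set xs \<noteq> {}" using L3 L_def by auto
  obtain m where m: "m \<in> set xs" "\<forall>b\<in>set xs. b \<le> m \<longrightarrow> m = b"
    using finite_has_minimal[OF fx nx] by blast
  then obtain i where i: "i < L" "xs ! i = m" using L_def by (metis in_set_conv_nth)
  have par: "(y, m) \<in> hasse V" if "y \<in> set xs" "E y m" for y
  proof -
    have "(m, y) \<notin> hasse V"
    proof
      assume "(m, y) \<in> hasse V"
      then have "y \<subset> m" unfolding hasse_def by auto
      then show False using m that by auto
    qed
    then show ?thesis using that by blast
  qed
  define j where "j = (i + L - 1) mod L"
  define k where "k = Suc i mod L"
  have jL: "j < L" and kL: "k < L" using L3 by (auto simp: j_def k_def)
  have sj: "Suc j mod L = i"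
  proof -
    have "Suc j mod L = Suc (i + L - 1) mod L" unfolding j_def by (simp add: mod_Suc_eq)
    also have "Suc (i + L - 1) = i + L" using L3 by simp
    finally show ?thesis using i by simp
  qed
  have jk: "j \<noteq> k"
  proof (cases "i = 0")
    case True
    then have "j = L - 1" "k = 1" using L3 by (auto simp: j_def k_def)
    then show ?thesis using L3 by simp
  next
    case False
    then have "i + L - 1 = (i - 1) + L" by simp
    then have "j = ((i - 1) + L) mod L" by (simp only: j_def)
    also have "\<dots> = (i - 1) mod L" by simp
    also have "\<dots> = i - 1" using i by simp
    finally have jj: "j = i - 1" .
    show ?thesis
    proof (cases "Suc i < L")
      case True then show ?thesis using jj False by (simp add: k_def)
    next
      case False
      then have "Suc i = L" using i by simp
      then have "k = 0" unfolding k_def by simp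
      then show ?thesis using jj \<open>i \<noteq> 0\<close> \<open>Suc i = L\<close> L3 by simp
    qed
  qed
  have e1: "E (xs ! j) m" using adj[OF jL] sj i by simp
  have e2: "E (xs ! k) m" using adj[OF i(1)] i unfolding k_def by auto
  have "xs ! j \<in> set xs" using jL L_def by simp
  then have "(xs ! j, m) \<in> hasse V" using par e1 by blast
  moreover have "xs ! k \<in> set xs" using kL L_def by simp
  then have "(xs ! k, m) \<in> hasse V" using par e2 by blast
  ultimately have "xs ! j = xs ! k" using unique_parent by blast
  then show False using dist jL kL jk L_def nth_eq_iff_index_eq by metis
qed

lemma out_tree: "is_out_tree_rooted V (hasse V) C"
proof -
  have roots: "{v \<in> V. in_degree (hasse V) v = 0} = {C}"
  proof (rule set_eqI, rule iffI)
    fix v assume v: "v \<in> {v \<in> V. in_degree (hasse V) v = 0}"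
    show "v \<in> {C}"
    proof (rule ccontr)
      assume "v \<notin> {C}"
      then have "v \<subset> C" using sub v by blast
      moreover have vV: "v \<in> V" using v by blast
      ultimately obtain p where p: "(p, v) \<in> hasse V" using hasse_up[OF fin root vV] by blast
      have "{u. (u, v) \<in> hasse V} \<subseteq> V" unfolding hasse_def by auto
      then have "finite {u. (u, v) \<in> hasse V}" by (rule finite_subset[OF _ fin])
      then have "in_degree (hasse V) v \<noteq> 0" unfolding in_degree_def using p
        by (metis card_0_eq empty_iff mem_Collect_eq)
      then show False using v by simp
    qed
  next
    fix v assume "v \<in> {C}"
    then have "v = C" by simp
    moreover have "{u. (u, C) \<in> hasse V} = {}" unfolding hasse_def using sub by auto
    ultimately show "v \<in> {v \<in> V. in_degree (hasse V) v = 0}"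
      using root by (simp add: in_degree_def)
  qed
  have "is_utree V E" unfolding is_utree_def using connected no_cycle root by blast
  moreover have "hasse V \<subseteq> V \<times> V" unfolding hasse_def by blast
  moreover have "\<forall>u v. (u, v) \<in> hasse V \<longrightarrow> u \<noteq> v \<and> (v, u) \<notin> hasse V"
    unfolding hasse_def by blast
  ultimately show ?thesis unfolding is_out_tree_rooted_def using fin roots by blast
qed

end


lemma sep_iff: "separates T i j \<longleftrightarrow> i \<noteq> j \<and> (i \<in> T \<longleftrightarrow> j \<notin> T)"
proof (cases "i = j")
  case True then show ?thesis by (simp add: separates_def)
next
  case False
  then show ?thesis unfolding separates_def
    by (cases "i \<in> T"; cases "j \<in> T") (auto simp: Int_insert_left)
qed

lemma nsr_iff: "(i, j) \<in> not_sep_rel n X \<longleftrightarrow>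
   i \<in> {1..n} \<and> j \<in> {1..n} \<and> (\<forall>T\<in>X. i \<in> T \<longleftrightarrow> j \<in> T)"
  unfolding not_sep_rel_def using sep_iff by auto

lemma nsr_equiv: "equiv {1..n} (not_sep_rel n X)"
proof (rule equivI)
  show "refl_on {1..n} (not_sep_rel n X)"
    unfolding refl_on_def by (auto simp: nsr_iff not_sep_rel_def separates_def)
  show "sym (not_sep_rel n X)" by (rule symI) (auto simp: nsr_iff)
  show "trans (not_sep_rel n X)" by (rule transI) (auto simp: nsr_iff)
  show "not_sep_rel n X \<subseteq> {1..n} \<times> {1..n}" by (auto simp: not_sep_rel_def)
qed

lemma count_classes:
  assumes e0: "equiv I R0" and e1: "equiv I R1" and R: "R1 \<subseteq> R0" and fI: "finite I"
    and C: "C \<in> I // R0" and K: "K \<subseteq> I // R1" and KC: "\<forall>k\<in>K. k \<subseteq> C" and fK: "finite K"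
  shows "card (I // R0) - 1 + card K \<le> card (I // R1)"
proof -
  define rep where "rep D = (SOME x. x \<in> D)" for D :: "'a set"
  define g where "g D = R1 `` {rep D}" for D
  have repD: "rep D \<in> D" if "D \<in> I // R0" for D
    using in_quotient_imp_non_empty[OF e0 that] unfolding rep_def by (simp add: some_in_eq)
  have DI: "D \<subseteq> I" if "D \<in> I // R0" for D
    using that equiv_type[OF e0] by (auto elim!: quotientE)
  have gQ: "g D \<in> I // R1" if "D \<in> I // R0" for D
    unfolding g_def using repD[OF that] DI[OF that] by (auto intro: quotientI)
  have gsub: "g D \<subseteq> D" if "D \<in> I // R0" for D
  proof
    fix y assume "y \<in> g D"
    then have "(rep D, y) \<in> R0" using R unfolding g_def by auto
    then show "y \<in> D" using in_quotient_imp_closed[OF e0 that repD[OF that]] by blast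
  qed
  have repg: "rep D \<in> g D" if "D \<in> I // R0" for D
    unfolding g_def using repD[OF that] DI[OF that] e1 by (meson equiv_class_self subsetD)
  have inj: "inj_on g (I // R0 - {C})"
  proof (rule inj_onI)
    fix D D' assume D: "D \<in> I // R0 - {C}" and D': "D' \<in> I // R0 - {C}" and eq: "g D = g D'"
    have "rep D \<in> D" using repD D by blast
    moreover have "rep D \<in> D'" using repg[of D] gsub[of D'] D D' eq by auto
    ultimately have "D \<inter> D' \<noteq> {}" by blast
    then show "D = D'" using quotient_disj[OF e0] D D' by blast
  qed
  have disj: "g ` (I // R0 - {C}) \<inter> K = {}"
  proof (rule ccontr)
    assume "g ` (I // R0 - {C}) \<inter> K \<noteq> {}"
    then obtain D where D: "D \<in> I // R0 - {C}" "g D \<in> K" by blast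
    have "g D \<noteq> {}" using repg D by blast
    moreover have "g D \<subseteq> D" "g D \<subseteq> C" using gsub D KC by auto
    ultimately have "D \<inter> C \<noteq> {}" by blast
    then show False using quotient_disj[OF e0] D C by blast
  qed
  have fQ0: "finite (I // R0)" using fI e0 by (simp add: equiv_type finite_quotient)
  have fQ1: "finite (I // R1)" using fI e1 by (simp add: equiv_type finite_quotient)
  have "g ` (I // R0 - {C}) \<union> K \<subseteq> I // R1" using gQ K by blast
  then have "card (g ` (I // R0 - {C}) \<union> K) \<le> card (I // R1)" using fQ1 card_mono by blast
  moreover have "card (g ` (I // R0 - {C}) \<union> K) = card (g ` (I // R0 - {C})) + card K"
    using disj fK fQ0 by (simp add: card_Un_disjoint)
  moreover have "card (g ` (I // R0 - {C})) = card (I // R0) - 1"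
    using card_image[OF inj] C fQ0 by simp
  ultimately show ?thesis by simp
qed


theorem mainTheorem11:
  fixes n :: nat and \<T> \<F> :: "nat set set"
  assumes cover: "is_test_cover n \<T>"
    and singletons: "\<forall>x\<in>{1..n}. {x} \<in> \<T>"
    and F_sub: "\<F> \<subseteq> \<T>"
    and one_more: "\<forall>T\<in>\<T> - \<F>.
          card (induced_classes n (\<F> \<union> {T})) \<le> card (induced_classes n \<F>) + 1"
    and two_more: "\<forall>T\<in>\<T> - \<F>. \<forall>T'\<in>\<T> - \<F>.
          card (induced_classes n (\<F> \<union> {T, T'})) \<le> card (induced_classes n \<F>) + 2"
    and half: "\<forall>C\<in>induced_classes n \<F>. \<forall>S\<in>\<T>.
          is_C_test C S \<longrightarrow> 2 * card (S \<inter> C) \<le> card C"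
    and C: "C \<in> induced_classes n \<F>"
  shows "is_out_tree_rooted (O_verts \<T> C) (O_arcs \<T> C) C \<and>
         (\<forall>v\<in>O_verts \<T> C. 0 < out_degree (O_arcs \<T> C) v \<longrightarrow> 2 \<le> out_degree (O_arcs \<T> C) v)"
proof -
  let ?R0 = "not_sep_rel n \<F>"
  have CQ: "C \<in> {1..n} // ?R0" using C unfolding induced_classes_def .
  then obtain x0 where x0: "x0 \<in> {1..n}" and Ceq: "C = ?R0 `` {x0}" by (rule quotientE)
  have memC: "y \<in> C \<longleftrightarrow> y \<in> {1..n} \<and> (\<forall>T\<in>\<F>. x0 \<in> T \<longleftrightarrow> y \<in> T)" for y
    unfolding Ceq using x0 by (auto simp: nsr_iff)
  have C_sub: "C \<subseteq> {1..n}" using memC by blast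
  have finC: "finite C" by (rule finite_subset[OF C_sub]) simp
  have notF: "S \<notin> \<F>" if St: "is_C_test C S" for S
  proof
    assume SF: "S \<in> \<F>"
    obtain y where y: "y \<in> S" "y \<in> C" using St unfolding is_C_test_def by blast
    have "x0 \<in> S" using memC y SF by blast
    then have "C \<subseteq> S" using memC SF by blast
    then show False using St unfolding is_C_test_def by blast
  qed
  define V where "V = O_verts \<T> C"
  have V_cases: "X = C \<or> (\<exists>S. S \<in> \<T> \<and> is_C_test C S \<and> X = S \<inter> C)" if "X \<in> V" for X
    using that unfolding V_def O_verts_def by blast
  have finV: "finite V"
  proof -
    have "V \<subseteq> Pow C" unfolding V_def O_verts_def by blast
    then show ?thesis using finC by (meson finite_Pow_iff finite_subset)
  qed
  have rootV: "C \<in> V" unfolding V_def O_verts_def by blast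
  have subV: "\<forall>X\<in>V. X \<subseteq> C" using V_cases by blast
  have neV: "\<forall>X\<in>V. X \<noteq> C \<longrightarrow> X \<noteq> {}"
    using V_cases unfolding is_C_test_def by blast
  have lamST: "S \<inter> C \<inter> (S' \<inter> C) = {} \<or> S \<inter> C \<subseteq> S' \<inter> C \<or> S' \<inter> C \<subseteq> S \<inter> C"
    if S: "S \<in> \<T>" "is_C_test C S" and S': "S' \<in> \<T>" "is_C_test C S'" for S S'
  proof (rule ccontr)
    assume nl: "\<not> ?thesis"
    have n1: "S \<inter> C \<inter> (S' \<inter> C) \<noteq> {}" and n2: "\<not> S \<inter> C \<subseteq> S' \<inter> C"
      and n3: "\<not> S' \<inter> C \<subseteq> S \<inter> C" using nl by simp_all
    obtain a where a: "a \<in> C" "a \<in> S" "a \<in> S'" using n1 by blast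
    obtain b where b: "b \<in> C" "b \<in> S" "b \<notin> S'" using n2 by blast
    obtain c where c: "c \<in> C" "c \<notin> S" "c \<in> S'" using n3 by blast
    have hA: "2 * card (S \<inter> C) \<le> card C" using half[rule_format, OF C S(1) S(2)] .
    have hB: "2 * card (S' \<inter> C) \<le> card C" using half[rule_format, OF C S'(1) S'(2)] .
    have "card (S \<inter> C) + card (S' \<inter> C) = card ((S \<inter> C) \<union> (S' \<inter> C)) + card ((S \<inter> C) \<inter> (S' \<inter> C))"
      by (rule card_Un_Int) (use finC in auto)
    moreover have "card ((S \<inter> C) \<inter> (S' \<inter> C)) \<noteq> 0"
      using a finC n1 by (simp add: card_eq_0_iff)
    ultimately have "card ((S \<inter> C) \<union> (S' \<inter> C)) < card C" using hA hB by linarith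
    then have "(S \<inter> C) \<union> (S' \<inter> C) \<noteq> C" by (metis less_irrefl)
    then obtain d where d: "d \<in> C" "d \<notin> S" "d \<notin> S'" by blast
    let ?R1 = "not_sep_rel n (\<F> \<union> {S, S'})"
    have R1sub: "?R1 \<subseteq> ?R0" unfolding not_sep_rel_def by blast
    have cls: "?R1 `` {u} \<in> {1..n} // ?R1" if "u \<in> C" for u
      using that C_sub by (auto intro: quotientI)
    have self: "u \<in> ?R1 `` {u}" if "u \<in> C" for u
      using that C_sub by (auto simp: nsr_iff)
    have insub: "?R1 `` {u} \<subseteq> C" if "u \<in> C" for u
    proof
      fix y assume "y \<in> ?R1 `` {u}"
      then have "(u, y) \<in> ?R0" using R1sub by blast
      then show "y \<in> C" using in_quotient_imp_closed[OF nsr_equiv CQ that] by blast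
    qed
    have diff: "?R1 `` {u} \<noteq> ?R1 `` {w}" if "u \<in> C" "w \<in> C" "(u \<in> S \<longleftrightarrow> w \<notin> S) \<or> (u \<in> S' \<longleftrightarrow> w \<notin> S')" for u w
    proof
      assume "?R1 `` {u} = ?R1 `` {w}"
      then have "(u, w) \<in> ?R1" using self[OF that(2)] by blast
      then show False using that(3) by (auto simp: nsr_iff)
    qed
    define K where "K = {?R1 `` {a}, ?R1 `` {b}, ?R1 `` {c}, ?R1 `` {d}}"
    have d1: "?R1 `` {a} \<noteq> ?R1 `` {b}" by (rule diff[OF a(1) b(1)]) (use a b in blast)
    have d2: "?R1 `` {a} \<noteq> ?R1 `` {c}" by (rule diff[OF a(1) c(1)]) (use a c in blast)
    have d3: "?R1 `` {a} \<noteq> ?R1 `` {d}" by (rule diff[OF a(1) d(1)]) (use a d in blast)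
    have d4: "?R1 `` {b} \<noteq> ?R1 `` {c}" by (rule diff[OF b(1) c(1)]) (use b c in blast)
    have d5: "?R1 `` {b} \<noteq> ?R1 `` {d}" by (rule diff[OF b(1) d(1)]) (use b d in blast)
    have d6: "?R1 `` {c} \<noteq> ?R1 `` {d}" by (rule diff[OF c(1) d(1)]) (use c d in blast)
    have "card K = 4" unfolding K_def using d1 d2 d3 d4 d5 d6 by simp
    moreover have "card ({1..n} // ?R0) - 1 + card K \<le> card ({1..n} // ?R1)"
    proof (rule count_classes[OF nsr_equiv nsr_equiv R1sub _ CQ])
      show "K \<subseteq> {1..n} // ?R1" unfolding K_def using cls a b c d by blast
      show "\<forall>k\<in>K. k \<subseteq> C" unfolding K_def using insub a b c d by blast
    qed (auto simp: K_def)
    moreover have "card ({1..n} // ?R0) \<noteq> 0"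
    proof -
      have "finite ({1..n} // ?R0)" using equiv_type[OF nsr_equiv] by (simp add: finite_quotient)
      then show ?thesis using CQ by (metis card_0_eq empty_iff)
    qed
    moreover have "card ({1..n} // ?R1) \<le> card ({1..n} // ?R0) + 2"
      using two_more[rule_format, of S S'] S(1) S'(1) notF[OF S(2)] notF[OF S'(2)]
      unfolding induced_classes_def by blast
    ultimately show False by linarith
  qed
  have lamV: "\<forall>X\<in>V. \<forall>Y\<in>V. X \<inter> Y = {} \<or> X \<subseteq> Y \<or> Y \<subseteq> X"
  proof (intro ballI)
    fix X Y assume X: "X \<in> V" and Y: "Y \<in> V"
    show "X \<inter> Y = {} \<or> X \<subseteq> Y \<or> Y \<subseteq> X"
    proof (cases "X = C \<or> Y = C")
      case True then show ?thesis using X Y subV by blast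
    next
      case False
      then obtain S S' where "S \<in> \<T>" "is_C_test C S" "X = S \<inter> C"
        "S' \<in> \<T>" "is_C_test C S'" "Y = S' \<inter> C" using V_cases X Y by blast
      then show ?thesis using lamST by blast
    qed
  qed
  interpret lam_fam V C using finV rootV subV neV lamV by unfold_locales
  have tree: "is_out_tree_rooted V (hasse V) C" by (rule out_tree)
  have deg: "2 \<le> out_degree (hasse V) v" if v: "v \<in> V" "0 < out_degree (hasse V) v" for v
  proof -
    let ?W = "{w. (v, w) \<in> hasse V}"
    have "?W \<subseteq> V" unfolding hasse_def by blast
    then have fW: "finite ?W" by (rule finite_subset[OF _ finV])
    have "?W \<noteq> {}" using v(2) unfolding out_degree_def by (metis card.empty less_irrefl)
    then obtain w where w: "(v, w) \<in> hasse V" by blast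
    then have wv: "w \<in> V" "w \<subset> v" unfolding hasse_def by auto
    have "v \<subseteq> C" using subV v(1) by blast
    then have "w \<noteq> C" using wv by blast
    then have wne: "w \<noteq> {}" using neV wv by blast
    obtain x where x: "x \<in> v" "x \<notin> w" using wv by blast
    have xC: "x \<in> C" using x \<open>v \<subseteq> C\<close> by blast
    have "{x} \<in> \<T>" using singletons xC C_sub by blast
    moreover have "is_C_test C {x}" unfolding is_C_test_def using xC wne wv \<open>v \<subseteq> C\<close> x by blast
    ultimately have xV: "{x} \<in> V" unfolding V_def O_verts_def using xC by blast
    have "{x} \<subset> v" using x wv wne by blast
    then obtain u where u: "(v, u) \<in> hasse V" "{x} \<subseteq> u" using hasse_down[OF finV v(1) xV] by blast
    have "u \<noteq> w" using u x by blast
    then have "card {w, u} = 2" by simp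
    moreover have "{w, u} \<subseteq> ?W" using u w by blast
    ultimately have "2 \<le> card ?W" using card_mono[OF fW] by metis
    then show ?thesis unfolding out_degree_def .
  qed
  have "is_out_tree_rooted (O_verts \<T> C) (O_arcs \<T> C) C" using tree unfolding V_def O_arcs_eq .
  moreover have "\<forall>v\<in>O_verts \<T> C. 0 < out_degree (O_arcs \<T> C) v \<longrightarrow> 2 \<le> out_degree (O_arcs \<T> C) v"
    using deg unfolding V_def O_arcs_eq by blast
  ultimately show ?thesis by blast
qed

end
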